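(* Let $m>6C^2(C+1)$ and $l_m=\lfloor\frac{m-2}{C+1}\rfloor$. Let $F_m(\mathbf x)=\sum_{i=1}^n a_iP_m(x_i)$ be a node of the escalator tree of $m$-gonal forms with $n\ge (C-2)l_m+5$ and $a_1=a_2=\cdots=a_{(C-2)l_m+5}=1$. If $a_1+a_2+\cdots+a_n\ge m-4$, then $F_m(\mathbf x)$ is universal (hence a leaf).
   Context: For an integer $m\ge 3$ and $x\in\mathbb Z$ put $P_m(x)=\frac{m-2}{2}x^2-\frac{m-4}{2}x$. An $m$-gonal form of rank $n$ is $a_1P_m(x_1)+\cdots+a_nP_m(x_n)$ with positive integers $a_1\le\cdots\le a_n$ and $x_i\in\mathbb Z$; it represents $N$ if $N$ is a value at some integer vector, and is universal if it represents every positive integer. The truant of a non-universal form is the smallest positive integer it does not represent (the empty form has truant $1$). The escalator tree of $m$-gonal forms is the rooted tree whose root is the empty form; a universal node is a leaf, and a non-universal node $\sum_{i=1}^k a_iP_m(x_i)$ has as children exactly all forms $\sum_{i=1}^{k+1}a_iP_m(x_i)$ with $a_{k+1}\ge a_k$ (any $a_1\ge1$ if $k=0$) that represent the truant of the node. Standing assumption: $C$ is a fixed absolute constant such that for every $m\ge3$, every $m$-gonal form that represents every positive integer in $[1,C(m-2)]$ is universal. *)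

theory Defs
  imports Main
begin

text \<open>The m-gonal number P_m(x) = ((m-2)x^2 - (m-4)x)/2 (always an integer).\<close>
definition pgon :: "nat \<Rightarrow> int \<Rightarrow> int" where
  "pgon m x = ((int m - 2) * x^2 - (int m - 4) * x) div 2"

definition mgonal_form :: "nat list \<Rightarrow> bool" where
  "mgonal_form as \<longleftrightarrow> sorted as \<and> (\<forall>a\<in>set as. 0 < a)"

definition represents :: "nat \<Rightarrow> nat list \<Rightarrow> int \<Rightarrow> bool" where
  "represents m as N \<longleftrightarrow>
     (\<exists>x :: nat \<Rightarrow> int. N = (\<Sum>i<length as. int (as ! i) * pgon m (x i)))"

definition universal :: "nat \<Rightarrow> nat list \<Rightarrow> bool" where
  "universal m as \<longleftrightarrow> (\<forall>N::int. N > 0 \<longrightarrow> represents m as N)"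

definition truant :: "nat \<Rightarrow> nat list \<Rightarrow> int" where
  "truant m as = (LEAST N::int. N > 0 \<and> \<not> represents m as N)"

inductive escalator_node :: "nat \<Rightarrow> nat list \<Rightarrow> bool" for m :: nat where
  root: "escalator_node m []"
| child: "\<lbrakk> escalator_node m as; \<not> universal m as; 1 \<le> a;
            as \<noteq> [] \<longrightarrow> last as \<le> a;
            represents m (as @ [a]) (truant m as) \<rbrakk>
          \<Longrightarrow> escalator_node m (as @ [a])"

definition escalator_const :: "nat \<Rightarrow> bool" where
  "escalator_const C \<longleftrightarrow>
     (\<forall>m\<ge>3. \<forall>as. mgonal_form as \<longrightarrow>
        (\<forall>N::int. 1 \<le> N \<and> N \<le> int C * (int m - 2) \<longrightarrow> represents m as N) \<longrightarrow>
        universal m as)"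

end

theory Submission imports Defs begin

lemma pgon_0: "pgon m 0 = 0" by (simp add: pgon_def)
lemma pgon_1: "pgon m 1 = 1" by (simp add: pgon_def)
lemma pgon_m1: "pgon m (-1) = int m - 3" by (simp add: pgon_def)
lemma pgon_2: "pgon m 2 = int m"
proof -
  have "(int m - 2) * 2^2 - (int m - 4) * 2 = 2 * int m" by (simp add: algebra_simps)
  then show ?thesis by (simp add: pgon_def)
qed

lemma pgon_bound:
  assumes "4 \<le> m"
  shows "pgon m x \<ge> 0 \<and> (pgon m x \<in> {0,1} \<or> pgon m x \<ge> int m - 3)"
proof -
  define q where "q = (int m - 2) * x^2 - (int m - 4) * x"
  have pq: "pgon m x = q div 2" by (simp add: pgon_def q_def)
  consider "x \<ge> 2" | "x \<le> -1" | "x = 0" | "x = 1" by linarith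
  then show ?thesis
  proof cases
    case 1
    have "(x - 2) * ((int m - 2) * x + int m) \<ge> 0"
      using 1 assms by (intro mult_nonneg_nonneg) auto
    moreover have "(x - 2) * ((int m - 2) * x + int m) = q - 2 * int m"
      by (simp add: q_def power2_eq_square algebra_simps)
    ultimately have "q \<ge> 2 * int m" by linarith
    then have "q div 2 \<ge> int m" by linarith
    then show ?thesis using pq assms by auto
  next
    case 2
    have "(x + 1) * ((int m - 2) * x - 2 * (int m - 3)) \<ge> 0"
    proof (rule mult_nonpos_nonpos)
      show "x + 1 \<le> 0" using 2 by simp
      have "(int m - 2) * x \<le> 0" using 2 assms by (intro mult_nonneg_nonpos) auto
      then show "(int m - 2) * x - 2 * (int m - 3) \<le> 0" using assms by simp
    qed
    moreover have "(x + 1) * ((int m - 2) * x - 2 * (int m - 3)) = q - 2 * (int m - 3)"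
      by (simp add: q_def power2_eq_square algebra_simps)
    ultimately have "q \<ge> 2 * (int m - 3)" by linarith
    then have "q div 2 \<ge> int m - 3" using zdiv_mono1[of "2 * (int m - 3)" q 2] by simp
    then show ?thesis using pq assms by auto
  qed (auto simp: pgon_0 pgon_1)
qed

lemma sum_split_add: "(\<Sum>i<a+b. f i) = (\<Sum>i<a. f i) + (\<Sum>i<b. f (a+i))"
  for f :: "nat \<Rightarrow> int"
  by (induction b) (auto simp: add.assoc)

lemma rep_nil: "represents m [] 0" by (simp add: represents_def)

lemma rep_append:
  assumes "represents m xs A" "represents m ys B"
  shows "represents m (xs @ ys) (A + B)"
proof -
  obtain x1 where x1: "A = (\<Sum>i<length xs. int (xs ! i) * pgon m (x1 i))"
    using assms(1) by (auto simp: represents_def)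
  obtain x2 where x2: "B = (\<Sum>i<length ys. int (ys ! i) * pgon m (x2 i))"
    using assms(2) by (auto simp: represents_def)
  define x where "x i = (if i < length xs then x1 i else x2 (i - length xs))" for i
  have "(\<Sum>i<length (xs@ys). int ((xs@ys) ! i) * pgon m (x i))
      = (\<Sum>i<length xs. int ((xs@ys) ! i) * pgon m (x i))
        + (\<Sum>i<length ys. int ((xs@ys) ! (length xs + i)) * pgon m (x (length xs + i)))"
    by (simp add: sum_split_add)
  also have "\<dots> = A + B"
    unfolding x1 x2 x_def by (auto simp: nth_append intro!: sum.cong)
  finally show ?thesis unfolding represents_def by metis
qed

lemma rep_single: "represents m [a] (int a * pgon m c)"
  unfolding represents_def by (rule exI[of _ "\<lambda>_. c"]) simp

lemma rep_const: "represents m (replicate n 1) (int n * pgon m c)"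
  unfolding represents_def by (rule exI[of _ "\<lambda>_. c"]) simp

lemma rep_u:
  assumes "u \<le> n" shows "represents m (replicate n 1) (int u)"
proof -
  have "replicate n (1::nat) = replicate u 1 @ replicate (n-u) 1"
    using assms by (metis le_add_diff_inverse replicate_add)
  moreover have "represents m (replicate u 1 @ replicate (n-u) 1) (int u * pgon m 1 + int (n-u) * pgon m 0)"
    by (intro rep_append rep_const)
  ultimately show ?thesis by (simp add: pgon_0 pgon_1)
qed

lemma ones_rep:
  fixes s K :: nat and e :: int
  assumes "s + 2 \<le> K" "- int s \<le> e" "e \<le> int K + int s"
  shows "represents m (replicate K 1) (int s * (int m - 2) + e)"
proof -
  obtain i u :: nat where iu: "i \<le> s" "u \<le> K - s" "int u = e + int s - 3 * int i"
  proof (cases "e + int s \<le> 3 * int s")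
    case True
    have "(e + int s) mod 3 = e + int s - 3 * ((e + int s) div 3)"
      using div_mult_mod_eq[of "e + int s" 3] by linarith
    note h = this
    show ?thesis
      apply (rule that[of "nat ((e + int s) div 3)" "nat ((e + int s) mod 3)"])
      using True assms h by auto
  next
    case False
    show ?thesis
      apply (rule that[of s "nat (e - 2 * int s)"])
      using False assms by auto
  qed
  have "replicate K (1::nat) = replicate i 1 @ (replicate (s-i) 1 @ replicate (K-s) 1)"
    using iu assms by (simp flip: replicate_add)
  moreover have "represents m (replicate i 1 @ (replicate (s-i) 1 @ replicate (K-s) 1))
      (int i * pgon m 2 + (int (s-i) * pgon m (-1) + int u))"
    by (intro rep_append rep_const rep_u iu)
  moreover have "int i * pgon m 2 + (int (s-i) * pgon m (-1) + int u) = int s * (int m - 2) + e"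
    using iu by (simp add: pgon_2 pgon_m1 of_nat_diff algebra_simps)
  ultimately show ?thesis by metis
qed


lemma cover:
  fixes ys :: "nat list" and R M v :: int
  assumes R: "R \<ge> 0"
    and H: "\<forall>j<length ys. R + int (sum_list (take j ys)) + 1 \<le> M \<longrightarrow>
             int (ys!j) \<le> R + int (sum_list (take j ys)) + 1"
    and v: "0 \<le> v" "v \<le> min M (R + int (sum_list ys))"
  shows "\<exists>\<sigma>. represents m ys \<sigma> \<and> \<sigma> \<le> v \<and> v \<le> \<sigma> + R"
  using H v
proof (induction ys arbitrary: v rule: rev_induct)
  case Nil
  then show ?case using rep_nil by fastforce
next
  case (snoc a ys)
  have H': "\<forall>j<length ys. R + int (sum_list (take j ys)) + 1 \<le> M \<longrightarrow>
             int (ys!j) \<le> R + int (sum_list (take j ys)) + 1"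
  proof (intro allI impI)
    fix j assume j: "j < length ys" and c: "R + int (sum_list (take j ys)) + 1 \<le> M"
    have "j < length (ys@[a])" using j by simp
    then show "int (ys!j) \<le> R + int (sum_list (take j ys)) + 1"
      using snoc.prems(1)[rule_format, of j] c j by (simp add: nth_append)
  qed
  have ra0: "represents m [a] 0" using rep_single[of m a 0] by (simp add: pgon_0)
  have ra: "represents m [a] (int a)" using rep_single[of m a 1] by (simp add: pgon_1)
  show ?case
  proof (cases "v \<le> min M (R + int (sum_list ys))")
    case True
    then obtain \<sigma> where "represents m ys \<sigma>" "\<sigma> \<le> v" "v \<le> \<sigma> + R"
      using snoc.IH[OF H'] snoc.prems by blast
    then show ?thesis using rep_append[OF _ ra0, of ys \<sigma>] by fastforce
  next
    case False
    then have big: "v > R + int (sum_list ys)" "R + int (sum_list ys) + 1 \<le> M"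
      using snoc.prems by auto
    have "length ys < length (ys@[a])" by simp
    then have "int a \<le> R + int (sum_list ys) + 1"
      using snoc.prems(1) big(2) by (auto simp: nth_append)
    moreover have "v - int a \<le> R + int (sum_list ys)" using snoc.prems by simp
    ultimately obtain \<sigma> where "represents m ys \<sigma>" "\<sigma> \<le> v - int a" "v - int a \<le> \<sigma> + R"
      using snoc.IH[OF H', of "v - int a"] big by auto
    then show ?thesis using rep_append[OF _ ra, of ys \<sigma>] by (intro exI[of _ "\<sigma> + int a"]) auto
  qed
qed

lemma least_int:
  fixes P :: "int \<Rightarrow> bool"
  assumes "P x0" "\<forall>y. P y \<longrightarrow> 0 < y"
  shows "P (Least P) \<and> Least P \<le> x0"
proof -
  define n0 where "n0 = (LEAST n::nat. P (int n))"
  have px: "P (int (nat x0))" using assms by (metis less_le_not_le nat_0_le)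
  have p0: "P (int n0)" unfolding n0_def by (rule LeastI[of "\<lambda>n. P (int n)", OF px])
  have le: "int n0 \<le> y" if "P y" for y
  proof -
    have "P (int (nat y))" using that assms by (metis less_le_not_le nat_0_le)
    then have "n0 \<le> nat y" unfolding n0_def by (rule Least_le)
    then show ?thesis using that assms by (metis int_ops(1) less_le_not_le nat_0_le of_nat_0_le_iff order.trans zle_int)
  qed
  have "Least P = int n0" by (rule Least_equality) (use p0 le in auto)
  then show ?thesis using p0 le assms by simp
qed

lemma nonrep:
  assumes m: "4 \<le> m" and pos: "\<forall>a\<in>set bs. 0 < a"
    and s: "int (sum_list bs) + 1 \<le> int m - 4"
  shows "\<not> represents m bs (int (sum_list bs) + 1)"
proof
  assume "represents m bs (int (sum_list bs) + 1)"
  then obtain x where x: "int (sum_list bs) + 1 = (\<Sum>i<length bs. int (bs ! i) * pgon m (x i))"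
    by (auto simp: represents_def)
  have nn: "\<And>i. 0 \<le> int (bs ! i) * pgon m (x i)" using pgon_bound[OF m] by simp
  show False
  proof (cases "\<exists>i<length bs. pgon m (x i) \<ge> int m - 3")
    case True
    then obtain i where i: "i < length bs" "pgon m (x i) \<ge> int m - 3" by blast
    have "bs ! i > 0" using pos i by auto
    then have "int (bs ! i) * pgon m (x i) \<ge> 1 * (int m - 3)"
      using i m by (intro mult_mono) auto
    moreover have "int (bs ! i) * pgon m (x i) \<le> (\<Sum>i<length bs. int (bs ! i) * pgon m (x i))"
      by (rule member_le_sum) (use i nn in auto)
    ultimately show False using x s by simp
  next
    case False
    then have "\<And>i. i < length bs \<Longrightarrow> int (bs ! i) * pgon m (x i) \<le> int (bs ! i)"
      using pgon_bound[OF m] by (metis empty_iff insert_iff mult.right_neutral mult_zero_right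
          not_le of_nat_0_le_iff order_refl)
    then have "(\<Sum>i<length bs. int (bs ! i) * pgon m (x i)) \<le> (\<Sum>i<length bs. int (bs ! i))"
      by (intro sum_mono) auto
    also have "\<dots> = int (sum_list bs)"
      by (simp add: sum_list_sum_nth atLeast0LessThan)
    finally show False using x by linarith
  qed
qed

lemma sorted_last: "sorted xs \<Longrightarrow> x \<in> set xs \<Longrightarrow> x \<le> last xs"
  by (induction xs) (auto simp: last_in_set)

lemma esc:
  assumes "escalator_node m as" and m: "4 \<le> m"
  shows "mgonal_form as \<and> (\<forall>j<length as. int (sum_list (take j as)) + 1 \<le> int m - 4 \<longrightarrow>
            int (as!j) \<le> int (sum_list (take j as)) + 1)"
  using assms(1)
proof (induction rule: escalator_node.induct)
  case root
  then show ?case by (simp add: mgonal_form_def)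
next
  case (child bs a)
  have mg: "mgonal_form (bs @ [a])"
    using child by (auto simp: mgonal_form_def sorted_append dest: sorted_last)
  have last: "int a \<le> int (sum_list bs) + 1" if s: "int (sum_list bs) + 1 \<le> int m - 4"
  proof -
    define P where "P = (\<lambda>N. N > 0 \<and> \<not> represents m bs N)"
    have "P (int (sum_list bs) + 1)" unfolding P_def
      using nonrep[OF m _ s] child.IH by (auto simp: mgonal_form_def)
    then have L: "P (Least P) \<and> Least P \<le> int (sum_list bs) + 1"
      by (rule least_int) (simp add: P_def)
    have tr: "truant m bs = Least P" unfolding truant_def P_def by simp
    have T: "P (truant m bs)" "truant m bs \<le> int (sum_list bs) + 1"
      using L tr by auto
    obtain x where x: "truant m bs = (\<Sum>i<length (bs@[a]). int ((bs@[a]) ! i) * pgon m (x i))"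
      using child.hyps(5) by (auto simp: represents_def)
    have x2: "truant m bs = (\<Sum>i<length bs. int (bs ! i) * pgon m (x i)) + int a * pgon m (x (length bs))"
      using x by (simp add: nth_append)
    have "pgon m (x (length bs)) \<noteq> 0"
    proof
      assume "pgon m (x (length bs)) = 0"
      then have "represents m bs (truant m bs)" using x2 by (auto simp: represents_def)
      then show False using T unfolding P_def by auto
    qed
    then have p1: "pgon m (x (length bs)) \<ge> 1" using pgon_bound[OF m] by fastforce
    have "int a * 1 \<le> int a * pgon m (x (length bs))" using p1 by (intro mult_left_mono) auto
    moreover have "0 \<le> (\<Sum>i<length bs. int (bs ! i) * pgon m (x i))"
      using pgon_bound[OF m] by (intro sum_nonneg) simp
    ultimately show ?thesis using x2 T by linarith
  qed
  show ?case
  proof (intro conjI mg allI impI)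
    fix j assume j: "j < length (bs @ [a])"
      and c: "int (sum_list (take j (bs @ [a]))) + 1 \<le> int m - 4"
    show "int ((bs @ [a]) ! j) \<le> int (sum_list (take j (bs @ [a]))) + 1"
    proof (cases "j < length bs")
      case True
      then show ?thesis using child.IH c by (auto simp: nth_append)
    next
      case False
      then have "j = length bs" using j by simp
      then show ?thesis using last c by simp
    qed
  qed
qed


lemma rep_zero: "represents m ys 0"
  unfolding represents_def by (rule exI[of _ "\<lambda>_. 0"]) (simp add: pgon_0)

lemma pgon3_ne2: "pgon 3 y \<noteq> 2"
proof -
  have p: "pgon 3 y = (y^2 + y) div 2" by (simp add: pgon_def)
  consider "y \<ge> 2" | "y \<le> -3" | "y = -2" | "y = -1" | "y = 0" | "y = 1" by linarith
  then show ?thesis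
  proof cases
    case 1
    have "(y - 2) * (y + 3) \<ge> 0" using 1 by (intro mult_nonneg_nonneg) auto
    then have "y^2 + y \<ge> 6" by (simp add: power2_eq_square algebra_simps)
    then show ?thesis using p zdiv_mono1[of 6 "y^2+y" 2] by auto
  next
    case 2
    have "(y - 2) * (y + 3) \<ge> 0" using 2 by (intro mult_nonpos_nonpos) auto
    then have "y^2 + y \<ge> 6" by (simp add: power2_eq_square algebra_simps)
    then show ?thesis using p zdiv_mono1[of 6 "y^2+y" 2] by auto
  qed (auto simp: pgon_def)
qed

theorem lemma4p15:
  fixes C m :: nat and as :: "nat list"
  assumes hC: "escalator_const C"
    and hm: "int m > 6 * int C ^ 2 * (int C + 1)"
    and hnode: "escalator_node m as"
    and hn: "int (length as) \<ge> (int C - 2) * int ((m - 2) div (C + 1)) + 5"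
    and hones: "\<forall>i. int i < (int C - 2) * int ((m - 2) div (C + 1)) + 5 \<longrightarrow> as ! i = 1"
    and hsum: "int (sum_list as) \<ge> int m - 4"
  shows "universal m as"
proof -
  have hC': "\<And>m' as'. 3 \<le> m' \<Longrightarrow> mgonal_form as' \<Longrightarrow>
     (\<And>N. 1 \<le> N \<Longrightarrow> N \<le> int C * (int m' - 2) \<Longrightarrow> represents m' as' N) \<Longrightarrow> universal m' as'"
    using hC unfolding escalator_const_def by blast
  consider "C = 0" | "C = 1" | "C \<ge> 2" by linarith
  then show ?thesis
  proof cases
    case 1
    have "universal 3 []" by (rule hC') (use 1 in \<open>auto simp: mgonal_form_def\<close>)
    then have "represents 3 [] 1" unfolding universal_def by auto
    then show ?thesis by (simp add: represents_def)
  next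
    case 2
    have "universal 3 [1]"
    proof (rule hC')
      fix N :: int assume "1 \<le> N" "N \<le> int C * (int 3 - 2)"
      then have "N = 1" using 2 by simp
      then show "represents 3 [1] N" using rep_single[of 3 1 1] by (simp add: pgon_1)
    qed (auto simp: mgonal_form_def)
    then have "represents 3 [1] 2" unfolding universal_def by auto
    then obtain x where "2 = pgon 3 (x 0)" by (auto simp: represents_def)
    then show ?thesis using pgon3_ne2 by metis
  next
    case 3
    define l where "l = (m - 2) div (C + 1)"
    define K where "K = C + 2"
    have C2: "int C ^ 2 \<ge> 4" using 3 power_mono[of 2 "int C" 2] by simp
    have "6 * int C ^ 2 * (int C + 1) \<ge> 6 * 4 * 3"
      using C2 3 by (intro mult_mono) auto
    then have m73: "m \<ge> 73" using hm by linarith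
    have "6 * int C ^ 2 * (int C + 1) \<ge> 6 * 1 * (int C + 1)"
      using C2 3 by (intro mult_mono) auto
    then have mC: "int m \<ge> 6 * (int C + 1)" using hm by linarith
    have Kk: "int K \<le> (int C - 2) * int l + 5"
    proof (cases "C = 2")
      case True then show ?thesis by (simp add: K_def)
    next
      case False
      have "int (2 * (C + 1) + 2) \<le> int m" using mC by simp
      then have "2 * (C + 1) + 2 \<le> m" by (simp only: of_nat_le_iff)
      then have "2 * (C + 1) \<le> m - 2" by simp
      then have "2 \<le> l" unfolding l_def by (subst less_eq_div_iff_mult_less_eq) auto
      then have "(int C - 2) * 2 \<le> (int C - 2) * int l" using 3 by (intro mult_left_mono) auto
      then show ?thesis using False 3 by (simp add: K_def)
    qed
    have lenK: "K \<le> length as" using hn Kk unfolding l_def by linarith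
    have one: "as ! i = 1" if "i < K" for i using hones Kk that unfolding l_def by auto
    define ys where "ys = drop K as"
    have tk: "take K as = replicate K 1"
      by (rule nth_equalityI) (use lenK one in auto)
    have asd: "as = replicate K 1 @ ys" unfolding ys_def
      by (metis append_take_drop_id tk)
    have m4: "4 \<le> m" using m73 by simp
    note E = esc[OF hnode m4]
    have sumas: "int (sum_list as) = int K + int (sum_list ys)"
      using asd by (simp add: sum_list_replicate)
    have H: "\<forall>j<length ys. int K + int (sum_list (take j ys)) + 1 \<le> int m - 4 \<longrightarrow>
             int (ys!j) \<le> int K + int (sum_list (take j ys)) + 1"
    proof (intro allI impI)
      fix j assume j: "j < length ys" and c: "int K + int (sum_list (take j ys)) + 1 \<le> int m - 4"
      have t: "take (K + j) as = replicate K 1 @ take j ys" using asd by simp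
      have n: "as ! (K + j) = ys ! j" using asd by (simp add: nth_append)
      have "K + j < length as" using asd j by simp
      then show "int (ys!j) \<le> int K + int (sum_list (take j ys)) + 1"
        using E c t n by (auto simp: sum_list_replicate)
    qed
    have cov: "\<exists>\<sigma>. represents m ys \<sigma> \<and> \<sigma> \<le> v \<and> v \<le> \<sigma> + int K"
      if "0 \<le> v" "v \<le> int m - 4" for v
      by (rule cover[OF _ H]) (use that hsum sumas in auto)
    show ?thesis
    proof (rule hC')
      show "3 \<le> m" using m73 by simp
      show "mgonal_form as" using E by simp
      fix N :: int assume N: "1 \<le> N" "N \<le> int C * (int m - 2)"
      define d where "d = int m - 2"
      have d: "d > 0" using m73 by (simp add: d_def)
      define s where "s = N div d"
      define r where "r = N mod d"
      have Nsr: "N = s * d + r" unfolding s_def r_def by simp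
      have r: "0 \<le> r" "r \<le> int m - 3"
        using pos_mod_bound[OF d, of N] pos_mod_sign[OF d, of N] unfolding r_def d_def by auto
      have s0: "s \<ge> 0" using N d unfolding s_def by (simp add: pos_imp_zdiv_nonneg_iff)
      have sC: "s \<le> int C"
      proof (rule ccontr)
        assume "\<not> s \<le> int C"
        then have "(int C + 1) * d \<le> s * d" using d by (intro mult_right_mono) auto
        then show False using N Nsr r d unfolding d_def by (simp add: algebra_simps)
      qed
      define s' where "s' = nat s"
      have s's: "int s' = s" using s0 by (simp add: s'_def)
      have s'K: "s' + 2 \<le> K" using sC s's K_def by linarith
      have fin: "represents m as N" if "- int s' \<le> e" "e \<le> int K + int s'" "represents m ys \<sigma>"
        "N = int s' * (int m - 2) + e + \<sigma>" for e \<sigma>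
      proof -
        have "represents m (replicate K 1 @ ys) (int s' * (int m - 2) + e + \<sigma>)"
          by (intro rep_append ones_rep that s'K)
        then show ?thesis using asd that(4) by simp
      qed
      show "represents m as N"
      proof (cases "r \<le> int m - 4")
        case True
        obtain \<sigma> where "represents m ys \<sigma>" "\<sigma> \<le> r" "r \<le> \<sigma> + int K" using cov[of r] True r by auto
        then show ?thesis
          by (intro fin[of "r - \<sigma>" \<sigma>]) (use Nsr s's d_def in auto)
      next
        case False
        then have rr: "r = int m - 3" using r by simp
        show ?thesis
        proof (cases "s = 0")
          case True
          have "N = int 1 * (int m - 2) + (-1) + 0" using Nsr True rr by simp
          moreover have "represents m as (int 1 * (int m - 2) + (-1) + 0)"
          proof -
            have "represents m (replicate K 1 @ ys) (int 1 * (int m - 2) + (-1) + 0)"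
              by (intro rep_append ones_rep rep_zero) (use K_def 3 in auto)
            then show ?thesis using asd by simp
          qed
          ultimately show ?thesis by simp
        next
          case False
          obtain \<sigma> where "represents m ys \<sigma>" "\<sigma> \<le> int m - 4" "int m - 4 \<le> \<sigma> + int K"
            using cov[of "int m - 4"] m73 by auto
          then show ?thesis
            by (intro fin[of "r - \<sigma>" \<sigma>]) (use Nsr s's d_def rr False s0 in auto)
        qed
      qed
    qed
  qed
qed

end
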